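(* Let $(\mathfrak{g}_0,[\cdot,\cdot]_0,\langle\cdot,\cdot\rangle_0)$ be a Euclidean Lie algebra, let $\mu\in\mathbb{R}$, $b\in\mathfrak{g}_0$, and let $K,D:\mathfrak{g}_0\to\mathfrak{g}_0$ be endomorphisms with $K$ skew-symmetric, such that the double extension $\mathfrak{g}=\mathbb{R}e\oplus\mathfrak{g}_0\oplus\mathbb{R}\bar e$ with parameters $(K,D,\mu,b)$ (described in the context) is a Lie algebra. Then the Lorentzian Lie algebra $(\mathfrak{g},\langle\cdot,\cdot\rangle)$ is Einstein if and only if $\mathfrak{g}$ is Ricci-flat, $(\mathfrak{g}_0,\langle\cdot,\cdot\rangle_0)$ is Ricci-flat, and for all $u\in\mathfrak{g}_0$: $$4\,\mathrm{tr}(\mathrm{ad}^0_b)+4\mu\,\mathrm{tr}(D)-2\,\mathrm{tr}(D^2)-2\,\mathrm{tr}(DD^* )-\mathrm{tr}(K^2)=0,$$ $$\mathrm{tr}(J^0_u\circ K)+2\,\mathrm{tr}\big((D+D^* )\circ\mathrm{ad}^0_u\big)+2\,\mathrm{tr}(\mathrm{ad}_{D^*(u)})-2\,\mathrm{tr}(\mathrm{ad}_{K(u)})=0.$$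
   Context: Double extension: $\mathfrak{g}=\mathbb{R}e\oplus\mathfrak{g}_0\oplus\mathbb{R}\bar e$ with Lorentzian form $\langle e,e\rangle=\langle\bar e,\bar e\rangle=0$, $\langle e,\bar e\rangle=1$, $\mathfrak{g}_0\perp\{e,\bar e\}$, $\langle\cdot,\cdot\rangle|_{\mathfrak{g}_0}=\langle\cdot,\cdot\rangle_0$, and skew-symmetric bracket $[\bar e,e]=\mu e$, $[\bar e,u]=D(u)+\langle b,u\rangle_0e$, $[u,v]=[u,v]_0+\langle K(u),v\rangle_0e$, $[e,u]=0$ for $u,v\in\mathfrak{g}_0$. Here $\mathrm{ad}^0$ is the adjoint representation of $\mathfrak{g}_0$, $\mathrm{ad}$ that of $\mathfrak{g}$, adjoints $^*$ are with respect to $\langle\cdot,\cdot\rangle_0$, and $J^0_u(v)=(\mathrm{ad}^0_v)^*(u)$. The Levi-Civita product $\mathrm{L}$ of a metric Lie algebra is given by $2\langle \mathrm{L}_uv,w\rangle=\langle[u,v],w\rangle+\langle[w,u],v\rangle+\langle[w,v],u\rangle$, curvature $K(u,v)=\mathrm{L}_{[u,v]}-[\mathrm{L}_u,\mathrm{L}_v]$, Ricci operator $\langle\mathrm{Ric}(u),v\rangle=\mathrm{tr}(w\mapsto K(u,w)v)$; Einstein means $\mathrm{Ric}=\lambda\mathrm{Id}$ for some $\lambda\in\mathbb{R}$, Ricci-flat means $\mathrm{Ric}=0$. *)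

theory Defs
  imports "HOL-Analysis.Analysis"
begin

definition ltrace :: "('v::euclidean_space \<Rightarrow> 'v) \<Rightarrow> real" where
  "ltrace f = (\<Sum>i\<in>Basis. inner (f i) i)"

definition lie_algebra :: "('v::real_vector \<Rightarrow> 'v \<Rightarrow> 'v) \<Rightarrow> bool" where
  "lie_algebra br \<longleftrightarrow> bilinear br \<and> (\<forall>x. br x x = 0) \<and>
     (\<forall>x y z. br x (br y z) + br y (br z x) + br z (br x y) = 0)"

definition LC :: "('v \<Rightarrow> 'v \<Rightarrow> real) \<Rightarrow> ('v \<Rightarrow> 'v \<Rightarrow> 'v) \<Rightarrow> 'v \<Rightarrow> 'v \<Rightarrow> 'v" where
  "LC m br u v = (THE z. \<forall>w. 2 * m z w = m (br u v) w + m (br w u) v + m (br w v) u)"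

definition curv :: "('v::real_vector \<Rightarrow> 'v \<Rightarrow> real) \<Rightarrow> ('v \<Rightarrow> 'v \<Rightarrow> 'v) \<Rightarrow> 'v \<Rightarrow> 'v \<Rightarrow> 'v \<Rightarrow> 'v" where
  "curv m br u v w = LC m br (br u v) w - (LC m br u (LC m br v w) - LC m br v (LC m br u w))"

definition Ric :: "('v::euclidean_space \<Rightarrow> 'v \<Rightarrow> real) \<Rightarrow> ('v \<Rightarrow> 'v \<Rightarrow> 'v) \<Rightarrow> 'v \<Rightarrow> 'v" where
  "Ric m br u = (THE z. \<forall>v. m z v = ltrace (\<lambda>w. curv m br u w v))"

definition einstein :: "('v::euclidean_space \<Rightarrow> 'v \<Rightarrow> real) \<Rightarrow> ('v \<Rightarrow> 'v \<Rightarrow> 'v) \<Rightarrow> bool" where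
  "einstein m br \<longleftrightarrow> (\<exists>c::real. \<forall>u. Ric m br u = c *\<^sub>R u)"

definition ricci_flat :: "('v::euclidean_space \<Rightarrow> 'v \<Rightarrow> real) \<Rightarrow> ('v \<Rightarrow> 'v \<Rightarrow> 'v) \<Rightarrow> bool" where
  "ricci_flat m br \<longleftrightarrow> (\<forall>u. Ric m br u = 0)"

text \<open>Double extension g = R e + g0 + R ebar; an element (s,u,t) stands for
  s e + u + t ebar.\<close>
definition dext_metric :: "real \<times> 'a::real_inner \<times> real \<Rightarrow> real \<times> 'a \<times> real \<Rightarrow> real" where
  "dext_metric x y = (case x of (s,u,t) \<Rightarrow> case y of (s',u',t') \<Rightarrow>
      s * t' + t * s' + inner u u')"

definition dext_bracket ::
  "('a::real_inner \<Rightarrow> 'a \<Rightarrow> 'a) \<Rightarrow> ('a \<Rightarrow> 'a) \<Rightarrow> ('a \<Rightarrow> 'a) \<Rightarrow> real \<Rightarrow> 'a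
    \<Rightarrow> real \<times> 'a \<times> real \<Rightarrow> real \<times> 'a \<times> real \<Rightarrow> real \<times> 'a \<times> real" where
  "dext_bracket br0 K D \<mu> b x y = (case x of (s,u,t) \<Rightarrow> case y of (s',u',t') \<Rightarrow>
      (\<mu> * (t * s' - s * t') + inner (K u) u' + t * inner b u' - t' * inner b u,
       br0 u u' + t *\<^sub>R D u' - t' *\<^sub>R D u,
       0))"

end

theory Submission
  imports Defs
begin

lemma vec_eqI:
  fixes x y :: "'a::real_inner"
  assumes "\<And>z. inner x z = inner y z" shows "x = y"
proof -
  have "inner (x - y) (x - y) = 0" using assms[of "x - y"] by (simp add: inner_diff_left)
  thus ?thesis by simp
qed

lemma ltrace_cong: "(\<And>i. i \<in> Basis \<Longrightarrow> inner (f i) i = inner (g i) i) \<Longrightarrow> ltrace f = ltrace g"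
  unfolding ltrace_def by (rule sum.cong) auto

lemma ltrace_add: "ltrace (\<lambda>x. f x + g x) = ltrace f + ltrace g"
  unfolding ltrace_def by (simp add: inner_add_left sum.distrib)

lemma ltrace_diff: "ltrace (\<lambda>x. f x - g x) = ltrace f - ltrace g"
  unfolding ltrace_def by (simp add: inner_diff_left sum_subtractf)

lemma ltrace_scale: "ltrace (\<lambda>x. c *\<^sub>R f x) = c * ltrace f"
  unfolding ltrace_def by (simp add: sum_distrib_left)

lemma trace_comm:
  fixes f g :: "'a::euclidean_space \<Rightarrow> 'a"
  assumes f: "linear f" and g: "linear g"
  shows "(\<Sum>i\<in>Basis. inner (f (g i)) i) = (\<Sum>i\<in>Basis. inner (g (f i)) i)"
proof -
  have "(\<Sum>i\<in>Basis. inner (f (g i)) i) = (\<Sum>i\<in>Basis. \<Sum>j\<in>Basis. inner (g i) j * inner (f j) i)"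
  proof (rule sum.cong[OF refl])
    fix i :: 'a
    have "inner (f (g i)) i = inner (g i) (adjoint f i)" by (simp add: adjoint_clauses[OF f])
    also have "\<dots> = (\<Sum>j\<in>Basis. inner (g i) j * inner (adjoint f i) j)" by (rule euclidean_inner)
    also have "\<dots> = (\<Sum>j\<in>Basis. inner (g i) j * inner (f j) i)" by (simp add: adjoint_clauses[OF f] inner_commute)
    finally show "inner (f (g i)) i = (\<Sum>j\<in>Basis. inner (g i) j * inner (f j) i)" .
  qed
  also have "\<dots> = (\<Sum>j\<in>Basis. \<Sum>i\<in>Basis. inner (f j) i * inner (g i) j)"
    by (subst sum.swap) (simp add: mult.commute)
  also have "\<dots> = (\<Sum>j\<in>Basis. inner (g (f j)) j)"
  proof (rule sum.cong[OF refl])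
    fix j :: 'a
    have "inner (g (f j)) j = inner (f j) (adjoint g j)" by (simp add: adjoint_clauses[OF g])
    also have "\<dots> = (\<Sum>i\<in>Basis. inner (f j) i * inner (adjoint g j) i)" by (rule euclidean_inner)
    also have "\<dots> = (\<Sum>i\<in>Basis. inner (f j) i * inner (g i) j)" by (simp add: adjoint_clauses[OF g] inner_commute)
    finally show "(\<Sum>i\<in>Basis. inner (f j) i * inner (g i) j) = inner (g (f j)) j" by simp
  qed
  finally show ?thesis .
qed

lemma sum_Basis_prod_real:
  fixes g :: "'a::euclidean_space \<times> 'b::euclidean_space \<Rightarrow> real"
  shows "sum g Basis = (\<Sum>u\<in>Basis. g (u, 0)) + (\<Sum>v\<in>Basis. g (0, v))"
proof -
  have "inj_on (\<lambda>u. (u::'a, 0::'b)) Basis" "inj_on (\<lambda>u. (0::'a, u::'b)) Basis"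
    by (auto intro!: inj_onI)
  thus ?thesis
    unfolding Basis_prod_def
    by (subst sum.union_disjoint) (auto simp: Basis_prod_def sum.reindex)
qed

lemma ltrace_prod:
  fixes f :: "real \<times> 'a::euclidean_space \<times> real \<Rightarrow> real \<times> 'a \<times> real"
  shows "ltrace f = fst (f (1,0,0)) + (\<Sum>i\<in>Basis. inner (fst (snd (f (0,i,0)))) i) + snd (snd (f (0,0,1)))"
  unfolding ltrace_def
  by (simp add: sum_Basis_prod_real inner_prod_def zero_prod_def)


locale dx =
  fixes br0 :: "'a::euclidean_space \<Rightarrow> 'a \<Rightarrow> 'a" and K D :: "'a \<Rightarrow> 'a" and \<mu> :: real and b :: 'a
  assumes bil: "bilinear br0" and alt: "\<And>x. br0 x x = 0"
    and jac: "\<And>x y z. br0 x (br0 y z) + br0 y (br0 z x) + br0 z (br0 x y) = 0"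
    and K_lin: "linear K" and D_lin: "linear D"
    and K_skew: "\<And>u v. inner (K u) v = - inner u (K v)"
begin

lemma br_simps[simp]:
  "br0 (x + y) z = br0 x z + br0 y z" "br0 x (y + z) = br0 x y + br0 x z"
  "br0 (c *\<^sub>R x) y = c *\<^sub>R br0 x y" "br0 x (c *\<^sub>R y) = c *\<^sub>R br0 x y"
  "br0 (- x) y = - br0 x y" "br0 x (- y) = - br0 x y"
  "br0 (x - y) z = br0 x z - br0 y z" "br0 z (x - y) = br0 z x - br0 z y"
  "br0 0 y = 0" "br0 y 0 = 0"
  using bil by (simp_all add: bilinear_ladd bilinear_radd bilinear_lmul bilinear_rmul bilinear_lneg
     bilinear_rneg bilinear_lsub bilinear_rsub bilinear_lzero bilinear_rzero)

lemma br_skew: "br0 x y = - br0 y x"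
proof -
  have "br0 x x + br0 y x + (br0 x y + br0 y y) = 0" using alt[of "x+y"] by (simp only: br_simps)
  hence "br0 x y + br0 y x = 0" by (simp add: alt add.commute)
  thus ?thesis by (simp add: eq_neg_iff_add_eq_0)
qed

lemma lin_br: "linear (br0 u)"
  using bil unfolding bilinear_def by auto

lemma lin_brl: "linear (\<lambda>x. br0 x v)"
  using bil unfolding bilinear_def by auto

lemma adj_br[simp]: "inner (adjoint (br0 u) v) w = inner v (br0 u w)"
   "inner w (adjoint (br0 u) v) = inner (br0 u w) v"
  by (simp_all add: adjoint_clauses[OF lin_br])

lemma KD_simps[simp]:
  "K (x + y) = K x + K y" "K (c *\<^sub>R x) = c *\<^sub>R K x" "K 0 = 0" "K (- x) = - K x" "K (x - y) = K x - K y"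
  "D (x + y) = D x + D y" "D (c *\<^sub>R x) = c *\<^sub>R D x" "D 0 = 0" "D (- x) = - D x" "D (x - y) = D x - D y"
  "adjoint D (x + y) = adjoint D x + adjoint D y" "adjoint D (c *\<^sub>R x) = c *\<^sub>R adjoint D x"
  "adjoint D 0 = 0" "adjoint D (- x) = - adjoint D x" "adjoint D (x - y) = adjoint D x - adjoint D y"
  using K_lin D_lin adjoint_linear[OF D_lin]
  by (simp_all add: linear_add linear_scale linear_0 linear_neg linear_diff)

lemma adjD[simp]: "inner (adjoint D x) y = inner x (D y)" "inner x (adjoint D y) = inner (D x) y"
  by (simp_all add: adjoint_clauses[OF D_lin])

lemma lin_adjD: "linear (adjoint D)" by (rule adjoint_linear[OF D_lin])

definition Lz :: "'a \<Rightarrow> 'a \<Rightarrow> 'a" where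
  "Lz u v = (1/2) *\<^sub>R (br0 u v - adjoint (br0 u) v - adjoint (br0 v) u)"

lemma Lz_inner: "inner (Lz u v) w = (inner (br0 u v) w - inner v (br0 u w) - inner u (br0 v w)) / 2"
  unfolding Lz_def by (simp add: inner_diff_left)

lemma Lz_koszul: "2 * inner (Lz u v) w = inner (br0 u v) w + inner (br0 w u) v + inner (br0 w v) u"
proof -
  have "br0 w u = - br0 u w" "br0 w v = - br0 v w" by (rule br_skew)+
  moreover have "inner (br0 u w) v = inner v (br0 u w)" "inner (br0 v w) u = inner u (br0 v w)"
    by (rule inner_commute)+
  ultimately show ?thesis by (simp add: Lz_inner)
qed

lemma LC0: "LC inner br0 u v = Lz u v"
  unfolding LC_def
proof (rule the_equality)
  show "\<forall>w. 2 * inner (Lz u v) w = inner (br0 u v) w + inner (br0 w u) v + inner (br0 w v) u"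
    using Lz_koszul by blast
next
  fix z assume "\<forall>w. 2 * inner z w = inner (br0 u v) w + inner (br0 w u) v + inner (br0 w v) u"
  hence "\<And>w. inner z w = inner (Lz u v) w" using Lz_koszul by (metis mult_cancel_left zero_neq_numeral)
  thus "z = Lz u v" by (rule vec_eqI)
qed

lemma Lz_s0[simp]: "Lz (x + y) v = Lz x v + Lz y v"
  by (rule vec_eqI) (simp add: Lz_inner inner_add_left inner_add_right inner_diff_left inner_diff_right algebra_simps add_divide_distrib diff_divide_distrib)

lemma Lz_s1[simp]: "Lz u (x + y) = Lz u x + Lz u y"
  by (rule vec_eqI) (simp add: Lz_inner inner_add_left inner_add_right inner_diff_left inner_diff_right algebra_simps add_divide_distrib diff_divide_distrib)

lemma Lz_s2[simp]: "Lz (c *\<^sub>R x) v = c *\<^sub>R Lz x v"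
  by (rule vec_eqI) (simp add: Lz_inner inner_add_left inner_add_right inner_diff_left inner_diff_right algebra_simps add_divide_distrib diff_divide_distrib)

lemma Lz_s3[simp]: "Lz u (c *\<^sub>R y) = c *\<^sub>R Lz u y"
  by (rule vec_eqI) (simp add: Lz_inner inner_add_left inner_add_right inner_diff_left inner_diff_right algebra_simps add_divide_distrib diff_divide_distrib)

lemma Lz_s4[simp]: "Lz 0 v = 0"
  by (rule vec_eqI) (simp add: Lz_inner inner_add_left inner_add_right inner_diff_left inner_diff_right algebra_simps add_divide_distrib diff_divide_distrib)

lemma Lz_s5[simp]: "Lz u 0 = 0"
  by (rule vec_eqI) (simp add: Lz_inner inner_add_left inner_add_right inner_diff_left inner_diff_right algebra_simps add_divide_distrib diff_divide_distrib)

lemma Lz_s6[simp]: "Lz (x - y) v = Lz x v - Lz y v"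
  by (rule vec_eqI) (simp add: Lz_inner inner_add_left inner_add_right inner_diff_left inner_diff_right algebra_simps add_divide_distrib diff_divide_distrib)

lemma Lz_s7[simp]: "Lz u (x - y) = Lz u x - Lz u y"
  by (rule vec_eqI) (simp add: Lz_inner inner_add_left inner_add_right inner_diff_left inner_diff_right algebra_simps add_divide_distrib diff_divide_distrib)

lemma Lz_s8[simp]: "Lz (- x) v = - Lz x v"
  by (rule vec_eqI) (simp add: Lz_inner inner_add_left inner_add_right inner_diff_left inner_diff_right algebra_simps add_divide_distrib diff_divide_distrib)

lemma Lz_s9[simp]: "Lz u (- y) = - Lz u y"
  by (rule vec_eqI) (simp add: Lz_inner inner_add_left inner_add_right inner_diff_left inner_diff_right algebra_simps add_divide_distrib diff_divide_distrib)

definition A :: "'a \<Rightarrow> 'a" where "A u = (1/2) *\<^sub>R (K u + D u + adjoint D u)"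

lemma A_simps[simp]: "A (x + y) = A x + A y" "A (c *\<^sub>R x) = c *\<^sub>R A x" "A 0 = 0"
  "A (x - y) = A x - A y" "A (- x) = - A x"
  unfolding A_def by (simp_all add: algebra_simps)

lemma lin_A: "linear A" by (rule linearI) simp_all

definition Lg :: "real \<times> 'a \<times> real \<Rightarrow> real \<times> 'a \<times> real \<Rightarrow> real \<times> 'a \<times> real" where
  "Lg x y = (case x of (s,u,t) \<Rightarrow> case y of (s1,u1,t1) \<Rightarrow>
     (\<mu> * t * s1 + t * inner b u1 + inner (A u) u1,
      Lz u u1 + t *\<^sub>R (D u1 - A u1) - t1 *\<^sub>R A u - (t * t1) *\<^sub>R b,
      - \<mu> * t * t1))"

abbreviation gbr where "gbr \<equiv> dext_bracket br0 K D \<mu> b"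

end

lemma arith1: "- (p1::real) - p2 - p3 + (- q) - q2 - q3 + p1 - p3 - p2 = - 2 * (p3 + p2) - q - (q2 + q3)"
  by algebra

lemma arith2: "(4::real) * p1 = - 2 * p2 - q \<Longrightarrow> q + 2 * p2 + 2 * 0 - 2 * 0 = - 4 * p1"
  by algebra

context dx begin
lemma K_swap: "inner (K x) y = - inner (K y) x"
  by (metis K_skew inner_commute)

lemma Lg_koszul:
  "2 * dext_metric (Lg x y) w = dext_metric (gbr x y) w + dext_metric (gbr w x) y + dext_metric (gbr w y) x"
proof -
  obtain s u t where x: "x = (s,u,t)" by (cases x) auto
  obtain s1 u1 t1 where y: "y = (s1,u1,t1)" by (cases y) auto
  obtain s2 u2 t2 where w: "w = (s2,u2,t2)" by (cases w) auto
  have k: "K u2 \<bullet> u = - (K u \<bullet> u2)" "K u2 \<bullet> u1 = - (K u1 \<bullet> u2)" by (rule K_swap)+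
  have c: "u \<bullet> D u2 = D u2 \<bullet> u" "u1 \<bullet> D u2 = D u2 \<bullet> u1" "u \<bullet> D u1 = D u1 \<bullet> u"
     "u1 \<bullet> br0 u u2 = br0 u u2 \<bullet> u1" "u \<bullet> br0 u1 u2 = br0 u1 u2 \<bullet> u"
    by (simp_all add: inner_commute)
  have bb: "br0 u2 u = - br0 u u2" "br0 u2 u1 = - br0 u1 u2" by (rule br_skew)+
  show ?thesis
    unfolding x y w Lg_def dext_metric_def dext_bracket_def
    apply (simp add: inner_add_left inner_diff_left Lz_inner A_def)
    apply (simp only: k c bb inner_minus_left)
    apply algebra
    done
qed


lemma metric_eq:
  assumes "\<And>w. dext_metric z w = dext_metric z' w" shows "z = z'"
proof -
  obtain s u t where z: "z = (s,u,t)" by (cases z) auto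
  obtain s1 u1 t1 where z': "z' = (s1,u1,t1)" by (cases z') auto
  have "s = s1" using assms[of "(0,0,1)"] by (simp add: z z' dext_metric_def)
  moreover have "t = t1" using assms[of "(1,0,0)"] by (simp add: z z' dext_metric_def)
  moreover have "u = u1"
  proof (rule vec_eqI)
    fix v have "dext_metric z (0,v,0) = dext_metric z' (0,v,0)" by (rule assms)
    thus "inner u v = inner u1 v" by (simp add: z z' dext_metric_def)
  qed
  ultimately show ?thesis by (simp add: z z')
qed

lemma LCg: "LC dext_metric gbr x y = Lg x y"
  unfolding LC_def
proof (rule the_equality)
  show "\<forall>w. 2 * dext_metric (Lg x y) w = dext_metric (gbr x y) w + dext_metric (gbr w x) y + dext_metric (gbr w y) x"
    using Lg_koszul by blast
next
  fix z assume "\<forall>w. 2 * dext_metric z w = dext_metric (gbr x y) w + dext_metric (gbr w x) y + dext_metric (gbr w y) x"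
  hence "\<And>w. dext_metric z w = dext_metric (Lg x y) w" using Lg_koszul by (metis mult_cancel_left zero_neq_numeral)
  thus "z = Lg x y" by (rule metric_eq)
qed

lemma curv_g: "curv dext_metric gbr x w y = Lg (gbr x w) y - (Lg x (Lg w y) - Lg w (Lg x y))"
  unfolding curv_def LCg ..

lemma curv_0: "curv inner br0 u w v = Lz (br0 u w) v - (Lz u (Lz w v) - Lz w (Lz u v))"
  unfolding curv_def LC0 ..

lemma Lg_add: "Lg x (y + y') = Lg x y + Lg x y'"
proof -
  obtain s u t where x: "x = (s,u,t)" by (cases x) auto
  obtain s1 u1 t1 where y: "y = (s1,u1,t1)" by (cases y) auto
  obtain s2 u2 t2 where y': "y' = (s2,u2,t2)" by (cases y') auto
  show ?thesis unfolding x y y' Lg_def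
    by (simp add: algebra_simps inner_add_right scaleR_add_left)
qed

lemma Lg_scale: "Lg x (c *\<^sub>R y) = c *\<^sub>R Lg x y"
proof -
  obtain s u t where x: "x = (s,u,t)" by (cases x) auto
  obtain s1 u1 t1 where y: "y = (s1,u1,t1)" by (cases y) auto
  show ?thesis unfolding x y Lg_def
    by (simp add: algebra_simps)
qed

lemma Lg_zero2: "Lg x 0 = 0"
  using Lg_scale[of x 0 0] by simp

lemma Lg_e: "Lg (c,0,0) y = 0"
proof -
  obtain s1 u1 t1 where y: "y = (s1,u1,t1)" by (cases y) auto
  show ?thesis unfolding y Lg_def by (simp add: zero_prod_def)
qed

lemma curv_e: "curv dext_metric gbr x (1,0,0) y = 0"
proof -
  obtain s u t where x: "x = (s,u,t)" by (cases x) auto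
  have "gbr x (1,0,0) = (\<mu> * t, 0, 0)" unfolding x dext_bracket_def by simp
  thus ?thesis unfolding curv_g by (simp only: Lg_e Lg_zero2 diff_self diff_zero)
qed

lemma Lg_third: "snd (snd (Lg x y)) = - \<mu> * snd (snd x) * snd (snd y)"
  unfolding Lg_def by (simp add: split_beta)

lemma gbr_third: "snd (snd (gbr x y)) = 0"
  unfolding dext_bracket_def by (simp add: split_beta)

lemma curv_third: "snd (snd (curv dext_metric gbr x w y)) = 0"
  unfolding curv_g by (simp add: Lg_third gbr_third)

definition ricg where "ricg x y = ltrace (\<lambda>w. curv dext_metric gbr x w y)"

lemma ricg_mid: "ricg x y = (\<Sum>i\<in>Basis. inner (fst (snd (curv dext_metric gbr x (0,i,0) y))) i)"
  unfolding ricg_def ltrace_prod curv_e curv_third by simp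

lemma ricg_add: "ricg x (y + y') = ricg x y + ricg x y'"
  unfolding ricg_def curv_g Lg_add by (simp add: algebra_simps ltrace_add ltrace_diff)


lemma ricg_scale: "ricg x (c *\<^sub>R y) = c * ricg x y"
proof -
  have "curv dext_metric gbr x w (c *\<^sub>R y) = c *\<^sub>R curv dext_metric gbr x w y" for w
    unfolding curv_g Lg_scale by (simp add: scaleR_diff_right)
  thus ?thesis unfolding ricg_def by (simp add: ltrace_scale)
qed

lemma metric_zero[simp]: "dext_metric 0 v = 0"
  by (simp add: dext_metric_def zero_prod_def split_beta)

lemma ric_rep:
  "\<exists>z. \<forall>v. dext_metric z v = ricg x v"
proof -
  define f where "f u = ricg x (0,u,0)" for u
  have lf: "linear f"
  proof (rule linearI)
    fix u v :: 'a and c :: real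
    have "(0::real,u+v,0::real) = (0,u,0) + (0,v,0)" by simp
    thus "f (u + v) = f u + f v" unfolding f_def by (simp only: ricg_add)
    have "(0::real, c *\<^sub>R u,0::real) = c *\<^sub>R (0,u,0)" by simp
    thus "f (c *\<^sub>R u) = c *\<^sub>R f u" unfolding f_def by (simp only: ricg_scale) simp
  qed
  define z where "z = (ricg x (0,0,1), adjoint f 1, ricg x (1,0,0))"
  have "dext_metric z v = ricg x v" for v
  proof -
    obtain s u t where v: "v = (s,u,t)" by (cases v) auto
    have "v = s *\<^sub>R (1,0,0) + (0,u,0) + t *\<^sub>R (0,0,1)" by (simp add: v)
    hence "ricg x v = s * ricg x (1,0,0) + f u + t * ricg x (0,0,1)"
      by (simp only: ricg_add ricg_scale f_def)
    moreover have "inner (adjoint f 1) u = f u"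
      by (simp add: adjoint_clauses[OF lf])
    ultimately show ?thesis by (simp add: z_def v dext_metric_def)
  qed
  thus ?thesis by blast
qed

lemma ric_RF:
  assumes "Ric dext_metric gbr x = 0" shows "ricg x y = 0"
proof -
  obtain z where z: "\<forall>v. dext_metric z v = ricg x v" using ric_rep by blast
  have "Ric dext_metric gbr x = z"
    unfolding Ric_def ricg_def[symmetric]
    by (rule the_equality) (use z in \<open>auto intro: metric_eq\<close>)
  with assms have z0: "z = 0" by simp
  have "dext_metric z y = ricg x y" using z by blast
  with z0 show ?thesis by simp
qed

lemma curv_e1: "curv dext_metric gbr (1,0,0) w y = 0"
proof -
  obtain s u t where w: "w = (s,u,t)" by (cases w) auto
  have "gbr (1,0,0) w = (- \<mu> * t, 0, 0)" unfolding w dext_bracket_def by simp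
  thus ?thesis unfolding curv_g by (simp only: Lg_e Lg_zero2 diff_self diff_zero)
qed

lemma Ric_e: "Ric dext_metric gbr (1,0,0) = 0"
  unfolding Ric_def curv_e1
  by (rule the_equality) (auto simp: ltrace_def intro: metric_eq)

lemma einstein_iff: "einstein dext_metric gbr \<longleftrightarrow> ricci_flat dext_metric gbr"
proof
  assume "einstein dext_metric gbr"
  then obtain c where c: "\<And>u. Ric dext_metric gbr u = c *\<^sub>R u" unfolding einstein_def by blast
  from c[of "(1,0,0)"] have "c = 0" by (simp add: Ric_e zero_prod_def)
  with c show "ricci_flat dext_metric gbr" unfolding ricci_flat_def by simp
next
  assume "ricci_flat dext_metric gbr"
  thus "einstein dext_metric gbr" unfolding ricci_flat_def einstein_def by (metis scaleR_zero_left)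
qed

lemma ricg_R1: "ricg (0,u,0) (0,v,0) = ltrace (\<lambda>w. curv inner br0 u w v)"
  unfolding ricg_mid ltrace_def curv_g curv_0
  by (simp add: Lg_def dext_bracket_def)


lemma mid_R2: "fst (snd (curv dext_metric gbr (0,0,1) (0,i,0) (0,0,1))) =
   D (A i) - A (D i) - A (A i) - Lz i b + \<mu> *\<^sub>R A i"
  unfolding curv_g by (simp add: Lg_def dext_bracket_def algebra_simps)

lemma mid_R3: "fst (snd (curv dext_metric gbr (0,0,1) (0,i,0) (0,v,0))) =
   Lz (D i) v - (D (Lz i v) - A (Lz i v)) + Lz i (D v - A v)"
  unfolding curv_g by (simp add: Lg_def dext_bracket_def algebra_simps)


lemma lin_Lz1: "linear (\<lambda>i. Lz i v)" by (rule linearI) simp_all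

lemma Lz_diag: "inner (Lz i w) i = - inner (br0 w i) i"
proof -
  have "br0 i w = - br0 w i" by (rule br_skew)
  moreover have "inner i (br0 w i) = inner (br0 w i) i" by (rule inner_commute)
  ultimately show ?thesis by (simp add: Lz_inner alt)
qed

lemma K_diag: "inner (K x) x = 0"
  using K_skew[of x x] by (simp add: inner_commute)

lemma A_diag: "inner (A i) i = inner (D i) i"
proof -
  have "inner i (D i) = inner (D i) i" by (rule inner_commute)
  thus ?thesis unfolding A_def by (simp add: inner_add_left K_diag)
qed

lemma AA_pt: "4 * inner (A (A x)) x = inner (K (K x)) x + 2 * inner (D (D x)) x
    + inner (D (adjoint D x)) x + inner (adjoint D (D x)) x"
proof -
  have f1: "inner x (D (D x)) = inner (D (D x)) x" by (rule inner_commute)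
  have f2: "inner (K (D x)) x = - inner (K x) (D x)" by (rule K_swap)
  have f3: "inner (K (adjoint D x)) x = - inner (D (K x)) x"
    using K_swap[of "adjoint D x" x] by simp
  show ?thesis unfolding A_def
    by (simp add: inner_add_left inner_add_right algebra_simps f1 f2 f3)
qed


lemma R2: "4 * ricg (0,0,1) (0,0,1) = 4 * ltrace (br0 b) + 4 * \<mu> * ltrace D - 2 * ltrace (D \<circ> D)
     - 2 * ltrace (D \<circ> adjoint D) - ltrace (K \<circ> K)"
proof -
  let ?S = "\<lambda>f. (\<Sum>i\<in>Basis. inner (f i) i)"
  have r: "ricg (0,0,1) (0,0,1) = ?S (\<lambda>i. D (A i)) - ?S (\<lambda>i. A (D i)) - ?S (\<lambda>i. A (A i))
      - ?S (\<lambda>i. Lz i b) + \<mu> * ?S A"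
    unfolding ricg_mid mid_R2
    by (simp add: inner_diff_left inner_add_left sum_subtractf sum.distrib sum_distrib_left)
  have e1: "?S (\<lambda>i. D (A i)) = ?S (\<lambda>i. A (D i))" by (rule trace_comm[OF D_lin lin_A])
  have e2: "?S (\<lambda>i. Lz i b) = - ltrace (br0 b)" unfolding ltrace_def Lz_diag by (simp add: sum_negf)
  have e3: "?S A = ltrace D" unfolding ltrace_def A_diag ..
  have e5: "?S (\<lambda>i. adjoint D (D i)) = ?S (\<lambda>i. D (adjoint D i))" by (rule trace_comm[OF lin_adjD D_lin])
  have e4: "4 * ?S (\<lambda>i. A (A i)) = ltrace (K \<circ> K) + 2 * ltrace (D \<circ> D) + 2 * ltrace (D \<circ> adjoint D)"
    unfolding sum_distrib_left AA_pt ltrace_def o_def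
    using e5 by (simp add: sum.distrib sum_distrib_left)
  show ?thesis using e1 e2 e3 e4 unfolding r by (simp add: algebra_simps)
qed


lemma lin_trad: "linear (\<lambda>w. ltrace (br0 w))"
  by (rule linearI) (simp_all add: ltrace_def inner_add_left sum.distrib sum_distrib_left)

definition hv where "hv = adjoint (\<lambda>w. ltrace (br0 w)) 1"

lemma trad_h: "ltrace (br0 w) = inner w hv"
  unfolding hv_def adjoint_clauses[OF lin_trad] by simp

lemma tr_brbr: "ltrace (br0 (br0 w z)) = 0"
proof -
  have "br0 (br0 w z) i = br0 w (br0 z i) - br0 z (br0 w i)" for i
  proof -
    have "br0 w (br0 z i) + br0 z (br0 i w) + br0 i (br0 w z) = 0" by (rule jac)
    moreover have "br0 i w = - br0 w i" "br0 i (br0 w z) = - br0 (br0 w z) i" by (rule br_skew)+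
    ultimately show ?thesis by (simp add: algebra_simps eq_neg_iff_add_eq_0)
  qed
  hence "ltrace (br0 (br0 w z)) = (\<Sum>i\<in>Basis. inner (br0 w (br0 z i)) i) - (\<Sum>i\<in>Basis. inner (br0 z (br0 w i)) i)"
    unfolding ltrace_def by (simp add: inner_diff_left sum_subtractf)
  also have "\<dots> = 0" using trace_comm[OF lin_br lin_br, of w z] by simp
  finally show ?thesis .
qed

lemma h_perp: "inner hv (br0 w z) = 0"
  using tr_brbr[of w z] by (simp add: trad_h inner_commute)

lemma adj_h: "adjoint (br0 w) hv = 0"
  by (rule vec_eqI) (simp add: h_perp)

lemma Lz_hh: "Lz hv hv = 0"
  by (rule vec_eqI) (simp add: Lz_inner h_perp alt)

lemma curv_h_pt:
  "4 * inner (curv inner br0 hv i hv) i = - 2 * inner (br0 hv i) (adjoint (br0 hv) i)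
     - 3 * inner (br0 hv i) (br0 hv i) + inner (adjoint (br0 hv) i) (adjoint (br0 hv) i)"
proof -
  let ?X = "br0 hv" and ?Y = "adjoint (br0 hv)"
  have p1: "inner (Lz (?X i) hv) i = - (inner (?X (?X i)) i + inner (?X i) (?X i)) / 2"
  proof -
    have "br0 (?X i) hv = - ?X (?X i)" by (rule br_skew)
    thus ?thesis by (simp add: Lz_inner h_perp inner_commute[of i])
  qed
  have p2: "inner (Lz hv y) i = (inner y (?Y i) - inner y (?X i)) / 2" for y
    by (simp add: Lz_inner h_perp adjoint_clauses[OF lin_br])
  have p3: "inner (Lz i hv) z = - (inner (?X i) z + inner i (?X z)) / 2" for z
  proof -
    have "br0 i hv = - ?X i" by (rule br_skew)
    thus ?thesis by (simp add: Lz_inner h_perp)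
  qed
  have q1: "inner i (?X (?Y i)) = inner (?Y i) (?Y i)" by (metis adjoint_clauses(2)[OF lin_br])
  have q2: "inner i (?X (?X i)) = inner (?X i) (?Y i)" by (metis adjoint_clauses(2)[OF lin_br] inner_commute)
  have q3: "inner (?X (?X i)) i = inner (?X i) (?Y i)" by (metis q2 inner_commute)
  have "inner (curv inner br0 hv i hv) i = inner (Lz (?X i) hv) i - inner (Lz hv (Lz i hv)) i"
    unfolding curv_0 Lz_hh by (simp add: inner_diff_left)
  also have "\<dots> = - (inner (?X (?X i)) i + inner (?X i) (?X i)) / 2
      - ((- (inner (?X i) (?Y i) + inner i (?X (?Y i))) / 2) - (- (inner (?X i) (?X i) + inner i (?X (?X i))) / 2)) / 2"
    unfolding p1 p2 p3 ..
  finally have E: "inner (curv inner br0 hv i hv) i = - (inner (?X (?X i)) i + inner (?X i) (?X i)) / 2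
      - ((- (inner (?X i) (?Y i) + inner i (?X (?Y i))) / 2) - (- (inner (?X i) (?X i) + inner i (?X (?X i))) / 2)) / 2" .
  show ?thesis unfolding E q1 q2 q3 by (simp add: field_simps)
qed

lemma h_zero:
  assumes "ltrace (\<lambda>i. curv inner br0 hv i hv) = 0" shows "hv = 0"
proof -
  let ?X = "br0 hv" and ?Y = "adjoint (br0 hv)"
  let ?a = "\<lambda>i. inner (?X i) (?X i)" and ?c = "\<lambda>i. inner (?X i) (?Y i)" and ?d = "\<lambda>i. inner (?Y i) (?Y i)"
  have ad: "sum ?d Basis = sum ?a Basis"
  proof -
    have "?d i = inner (?X (?Y i)) i" for i by (metis adjoint_clauses(2)[OF lin_br] inner_commute)
    hence "sum ?d Basis = (\<Sum>i\<in>Basis. inner (?X (?Y i)) i)" by simp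
    also have "\<dots> = (\<Sum>i\<in>Basis. inner (?Y (?X i)) i)" by (rule trace_comm[OF lin_br adjoint_linear[OF lin_br]])
    also have "\<dots> = sum ?a Basis" by (simp only: adjoint_clauses(2)[OF lin_br])
    finally show ?thesis .
  qed
  have "4 * ltrace (\<lambda>i. curv inner br0 hv i hv) = (\<Sum>i\<in>Basis. - 2 * ?c i - 3 * ?a i + ?d i)"
    unfolding ltrace_def sum_distrib_left curv_h_pt ..
  also have "\<dots> = (\<Sum>i\<in>Basis. - inner (?X i + ?Y i) (?X i + ?Y i) + 2 * ?d i - 2 * ?a i)"
  proof (rule sum.cong[OF refl])
    fix i
    have "inner (?Y i) (?X i) = ?c i" by (rule inner_commute)
    thus "- 2 * ?c i - 3 * ?a i + ?d i = - inner (?X i + ?Y i) (?X i + ?Y i) + 2 * ?d i - 2 * ?a i"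
      by (simp add: inner_add_left inner_add_right)
  qed
  also have "\<dots> = - (\<Sum>i\<in>Basis. inner (?X i + ?Y i) (?X i + ?Y i)) + 2 * sum ?d Basis - 2 * sum ?a Basis"
    by (simp only: sum.distrib sum_subtractf sum_negf sum_distrib_left)
  also have "\<dots> = - (\<Sum>i\<in>Basis. inner (?X i + ?Y i) (?X i + ?Y i))" using ad by simp
  finally have "(\<Sum>i\<in>Basis. inner (?X i + ?Y i) (?X i + ?Y i)) = 0" using assms by simp
  hence z: "\<And>i. i \<in> Basis \<Longrightarrow> inner (?X i + ?Y i) (?X i + ?Y i) = 0"
    by (subst (asm) sum_nonneg_eq_0_iff) auto
  have "inner (?X i) i = 0" if "i \<in> Basis" for i
  proof -
    from z[OF that] have "?X i + ?Y i = 0" by simp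
    hence "inner (?X i + ?Y i) i = 0" by simp
    hence "inner (?X i) i + inner i (?X i) = 0" by (simp add: inner_add_left adjoint_clauses[OF lin_br])
    thus ?thesis by (simp add: inner_commute)
  qed
  hence "ltrace ?X = 0" unfolding ltrace_def by simp
  thus ?thesis by (simp add: trad_h)
qed


lemma lin_J: "linear (\<lambda>i. adjoint (br0 i) v)"
proof (rule linearI)
  fix x y :: 'a and c :: real
  show "adjoint (br0 (x + y)) v = adjoint (br0 x) v + adjoint (br0 y) v"
    by (rule vec_eqI) (simp add: inner_add_left inner_add_right)
  show "adjoint (br0 (c *\<^sub>R x)) v = c *\<^sub>R adjoint (br0 x) v"
    by (rule vec_eqI) simp
qed

lemma sym_zero: "(\<Sum>i\<in>Basis. inner v (br0 i (D i))) + (\<Sum>i\<in>Basis. inner v (br0 i (adjoint D i))) = 0"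
proof -
  let ?J = "\<lambda>i. adjoint (br0 i) v"
  have a: "inner v (br0 i (adjoint D i)) = inner (D (?J i)) i" for i
    by (metis adjD(2) adj_br(1))
  have c: "inner (?J (D i)) i = - inner v (br0 i (D i))" for i
  proof -
    have "br0 (D i) i = - br0 i (D i)" by (rule br_skew)
    thus ?thesis by (simp add: inner_commute)
  qed
  have "(\<Sum>i\<in>Basis. inner v (br0 i (adjoint D i))) = (\<Sum>i\<in>Basis. inner (D (?J i)) i)"
    unfolding a ..
  also have "\<dots> = (\<Sum>i\<in>Basis. inner (?J (D i)) i)" by (rule trace_comm[OF D_lin lin_J])
  also have "\<dots> = - (\<Sum>i\<in>Basis. inner v (br0 i (D i)))" unfolding c by (simp add: sum_negf)
  finally show ?thesis by simp
qed

lemma trg: "ltrace (gbr (0, w, 0)) = ltrace (br0 w)"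
  unfolding ltrace_prod by (simp add: dext_bracket_def ltrace_def)


lemma AL_pt: "4 * inner (A (Lz i v)) i = inner (br0 v i) (K i) - inner (br0 v i) (D i) - inner (br0 v i) (adjoint D i)
   + inner v (br0 i (K i)) - inner v (br0 i (D i)) - inner v (br0 i (adjoint D i))
   + inner (br0 v (K i)) i - inner (br0 v (D i)) i - inner (br0 v (adjoint D i)) i"
proof -
  let ?y = "Lz i v"
  have a1: "2 * inner (A ?y) i = - inner ?y (K i) + inner ?y (adjoint D i) + inner ?y (D i)"
    unfolding A_def by (simp add: inner_add_left K_skew)
  have l: "2 * inner (Lz i v) z = - inner (br0 v i) z - inner v (br0 i z) - inner (br0 v z) i" for z
  proof -
    have "br0 i v = - br0 v i" by (rule br_skew)
    moreover have "inner i (br0 v z) = inner (br0 v z) i" by (rule inner_commute)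
    ultimately show ?thesis by (simp add: Lz_inner)
  qed
  show ?thesis using a1 l[of "K i"] l[of "D i"] l[of "adjoint D i"]
    by (simp add: inner_commute[of "Lz i v"])
qed


lemma AL_sum: "4 * (\<Sum>i\<in>Basis. inner (A (Lz i v)) i) =
   - 2 * ltrace (\<lambda>w. D (br0 v w) + adjoint D (br0 v w)) - (\<Sum>i\<in>Basis. inner v (br0 (K i) i))"
proof -
  let ?S = "\<lambda>f. (\<Sum>i\<in>Basis. f i)"
  have s1: "?S (\<lambda>i. inner (br0 v i) (K i)) = - ?S (\<lambda>i. inner (K (br0 v i)) i)"
    by (simp add: K_skew sum_negf)
  have s2: "?S (\<lambda>i. inner (br0 v i) (D i)) = ?S (\<lambda>i. inner (adjoint D (br0 v i)) i)"
    by simp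
  have s3: "?S (\<lambda>i. inner (br0 v i) (adjoint D i)) = ?S (\<lambda>i. inner (D (br0 v i)) i)"
    by simp
  have s4: "?S (\<lambda>i. inner v (br0 i (K i))) = - ?S (\<lambda>i. inner v (br0 (K i) i))"
  proof -
    have "br0 i (K i) = - br0 (K i) i" for i by (rule br_skew)
    thus ?thesis by (simp add: sum_negf)
  qed
  have s5: "?S (\<lambda>i. inner v (br0 i (D i))) + ?S (\<lambda>i. inner v (br0 i (adjoint D i))) = 0"
    by (rule sym_zero)
  have s6: "?S (\<lambda>i. inner (br0 v (K i)) i) = ?S (\<lambda>i. inner (K (br0 v i)) i)"
    by (rule trace_comm[OF lin_br K_lin])
  have s7: "?S (\<lambda>i. inner (br0 v (D i)) i) = ?S (\<lambda>i. inner (D (br0 v i)) i)"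
    by (rule trace_comm[OF lin_br D_lin])
  have s8: "?S (\<lambda>i. inner (br0 v (adjoint D i)) i) = ?S (\<lambda>i. inner (adjoint D (br0 v i)) i)"
    by (rule trace_comm[OF lin_br lin_adjD])
  have tr: "ltrace (\<lambda>w. D (br0 v w) + adjoint D (br0 v w)) = ?S (\<lambda>i. inner (D (br0 v i)) i) + ?S (\<lambda>i. inner (adjoint D (br0 v i)) i)"
    unfolding ltrace_def by (simp add: inner_add_left sum.distrib)
  let ?TK = "?S (\<lambda>i. inner (K (br0 v i)) i)" and ?TD = "?S (\<lambda>i. inner (D (br0 v i)) i)"
    and ?TDs = "?S (\<lambda>i. inner (adjoint D (br0 v i)) i)" and ?Q = "?S (\<lambda>i. inner v (br0 (K i) i))"
    and ?Q2 = "?S (\<lambda>i. inner v (br0 i (D i)))" and ?Q3 = "?S (\<lambda>i. inner v (br0 i (adjoint D i)))"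
  have "4 * (\<Sum>i\<in>Basis. inner (A (Lz i v)) i) = ?S (\<lambda>i. inner (br0 v i) (K i)) - ?S (\<lambda>i. inner (br0 v i) (D i))
    - ?S (\<lambda>i. inner (br0 v i) (adjoint D i)) + ?S (\<lambda>i. inner v (br0 i (K i))) - ?S (\<lambda>i. inner v (br0 i (D i)))
    - ?S (\<lambda>i. inner v (br0 i (adjoint D i))) + ?S (\<lambda>i. inner (br0 v (K i)) i) - ?S (\<lambda>i. inner (br0 v (D i)) i)
    - ?S (\<lambda>i. inner (br0 v (adjoint D i)) i)"
    unfolding sum_distrib_left AL_pt by (simp only: sum.distrib sum_subtractf)
  also have "\<dots> = - ?TK - ?TDs - ?TD + (- ?Q) - ?Q2 - ?Q3 + ?TK - ?TD - ?TDs"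
    by (simp only: s1 s2 s3 s4 s6 s7 s8)
  also have "\<dots> = - 2 * (?TD + ?TDs) - ?Q - (?Q2 + ?Q3)"
    by (rule arith1)
  also have "\<dots> = - 2 * (?TD + ?TDs) - ?Q"
    by (simp only: s5 diff_zero)
  finally show ?thesis unfolding tr .
qed

lemma R3:
  assumes H0: "\<And>w. ltrace (br0 w) = 0"
  shows "ricg (0,0,1) (0,v,0) = (\<Sum>i\<in>Basis. inner (A (Lz i v)) i)"
proof -
  let ?S = "\<lambda>f. (\<Sum>i\<in>Basis. f i)"
  have "ricg (0,0,1) (0,v,0) = ?S (\<lambda>i. inner (Lz (D i) v) i) - ?S (\<lambda>i. inner (D (Lz i v)) i)
     + ?S (\<lambda>i. inner (A (Lz i v)) i) + ?S (\<lambda>i. inner (Lz i (D v - A v)) i)"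
    unfolding ricg_mid mid_R3 by (simp add: inner_diff_left inner_add_left sum.distrib sum_subtractf)
  moreover have "?S (\<lambda>i. inner (Lz (D i) v) i) = ?S (\<lambda>i. inner (D (Lz i v)) i)"
    using trace_comm[OF lin_Lz1 D_lin, of v] by simp
  moreover have "?S (\<lambda>i. inner (Lz i (D v - A v)) i) = 0"
    unfolding Lz_diag using H0[of "D v - A v"] by (simp add: ltrace_def sum_negf)
  ultimately show ?thesis by simp
qed

lemma cond2_eq:
  assumes H0: "\<And>w. ltrace (br0 w) = 0"
  shows "ltrace (\<lambda>v. adjoint (br0 (K v)) u) + 2 * ltrace (\<lambda>v. D (br0 u v) + adjoint D (br0 u v))
     + 2 * ltrace (gbr (0, adjoint D u, 0)) - 2 * ltrace (gbr (0, K u, 0)) = - 4 * ricg (0,0,1) (0,u,0)"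
proof -
  have e1: "ltrace (\<lambda>v. adjoint (br0 (K v)) u) = (\<Sum>i\<in>Basis. inner u (br0 (K i) i))"
    unfolding ltrace_def by (simp only: adj_br)
  have e2: "ltrace (gbr (0, adjoint D u, 0)) = 0" by (simp only: trg H0)
  have e3: "ltrace (gbr (0, K u, 0)) = 0" by (simp only: trg H0)
  have e4: "ricg (0,0,1) (0,u,0) = (\<Sum>i\<in>Basis. inner (A (Lz i u)) i)" by (rule R3[OF H0])
  show ?thesis unfolding e1 e2 e3 e4 by (rule arith2[OF AL_sum[of u]])
qed

lemma main_loc:
  shows "einstein dext_metric (gbr) \<longleftrightarrow>
     ricci_flat dext_metric (gbr) \<and>
     ricci_flat inner br0 \<and>
     (\<forall>u. 4 * ltrace (br0 b) + 4 * \<mu> * ltrace D - 2 * ltrace (D \<circ> D)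
            - 2 * ltrace (D \<circ> adjoint D) - ltrace (K \<circ> K) = 0 \<and>
          ltrace (\<lambda>v. adjoint (br0 (K v)) u)
            + 2 * ltrace (\<lambda>v. D (br0 u v) + adjoint D (br0 u v))
            + 2 * ltrace (gbr (0, adjoint D u, 0))
            - 2 * ltrace (gbr (0, K u, 0)) = 0)"
proof -
  show ?thesis
  proof
    assume "einstein dext_metric (gbr)"
    hence RF: "ricci_flat dext_metric (gbr)" by (simp only: einstein_iff)
    have r0: "ricg x y = 0" for x y
    proof -
      from RF have "Ric dext_metric gbr x = 0" unfolding ricci_flat_def by blast
      thus ?thesis by (rule ric_RF)
    qed
    have RF0: "ricci_flat inner br0"
      unfolding ricci_flat_def Ric_def
    proof
      fix u
      show "(THE z. \<forall>v. inner z v = ltrace (\<lambda>w. curv inner br0 u w v)) = 0"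
      proof (rule the_equality)
        show "\<forall>v. inner 0 v = ltrace (\<lambda>w. curv inner br0 u w v)"
          by (simp only: ricg_R1[symmetric] r0 inner_zero_left simp_thms)
      next
        fix z assume "\<forall>v. inner z v = ltrace (\<lambda>w. curv inner br0 u w v)"
        hence "\<And>v. inner z v = inner 0 v" by (simp only: ricg_R1[symmetric] r0 inner_zero_left)
        thus "z = 0" by (rule vec_eqI)
      qed
    qed
    have "ltrace (\<lambda>i. curv inner br0 hv i hv) = 0" using r0[of "(0,hv,0)" "(0,hv,0)"] unfolding ricg_R1 .
    hence "hv = 0" by (rule h_zero)
    hence H0: "\<And>w. ltrace (br0 w) = 0" by (simp add: trad_h)
    have c1: "4 * ltrace (br0 b) + 4 * \<mu> * ltrace D - 2 * ltrace (D \<circ> D)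
            - 2 * ltrace (D \<circ> adjoint D) - ltrace (K \<circ> K) = 0"
    proof -
      have "4 * ricg (0,0,1) (0,0,1) = 0" by (simp only: r0 mult_zero_right)
      with R2 show ?thesis by (rule HOL.trans[OF HOL.sym])
    qed
    have c2: "ltrace (\<lambda>v. adjoint (br0 (K v)) u)
            + 2 * ltrace (\<lambda>v. D (br0 u v) + adjoint D (br0 u v))
            + 2 * ltrace (gbr (0, adjoint D u, 0))
            - 2 * ltrace (gbr (0, K u, 0)) = 0" for u
    proof -
      have "- 4 * ricg (0,0,1) (0,u,0) = 0" by (simp only: r0 mult_zero_right)
      with cond2_eq[OF H0, of u] show ?thesis by (rule HOL.trans)
    qed
    show "ricci_flat dext_metric (gbr) \<and> ricci_flat inner br0 \<and>
     (\<forall>u. 4 * ltrace (br0 b) + 4 * \<mu> * ltrace D - 2 * ltrace (D \<circ> D)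
            - 2 * ltrace (D \<circ> adjoint D) - ltrace (K \<circ> K) = 0 \<and>
          ltrace (\<lambda>v. adjoint (br0 (K v)) u)
            + 2 * ltrace (\<lambda>v. D (br0 u v) + adjoint D (br0 u v))
            + 2 * ltrace (gbr (0, adjoint D u, 0))
            - 2 * ltrace (gbr (0, K u, 0)) = 0)"
      by (intro conjI allI RF RF0 c1 c2)
  next
    assume "ricci_flat dext_metric (gbr) \<and> ricci_flat inner br0 \<and>
     (\<forall>u. 4 * ltrace (br0 b) + 4 * \<mu> * ltrace D - 2 * ltrace (D \<circ> D)
            - 2 * ltrace (D \<circ> adjoint D) - ltrace (K \<circ> K) = 0 \<and>
          ltrace (\<lambda>v. adjoint (br0 (K v)) u)
            + 2 * ltrace (\<lambda>v. D (br0 u v) + adjoint D (br0 u v))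
            + 2 * ltrace (gbr (0, adjoint D u, 0))
            - 2 * ltrace (gbr (0, K u, 0)) = 0)"
    hence "ricci_flat dext_metric (gbr)" by (rule conjunct1)
    thus "einstein dext_metric (gbr)" by (simp only: einstein_iff)
  qed
qed


end

theorem proposition4p2:
  fixes br0 :: "'a::euclidean_space \<Rightarrow> 'a \<Rightarrow> 'a"
    and K D :: "'a \<Rightarrow> 'a" and \<mu> :: real and b :: 'a
  assumes g0_lie: "lie_algebra br0"
    and K_lin: "linear K" and D_lin: "linear D"
    and K_skew: "\<And>u v. inner (K u) v = - inner u (K v)"
    and g_lie: "lie_algebra (dext_bracket br0 K D \<mu> b)"
  shows "einstein dext_metric (dext_bracket br0 K D \<mu> b) \<longleftrightarrow>
     ricci_flat dext_metric (dext_bracket br0 K D \<mu> b) \<and>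
     ricci_flat inner br0 \<and>
     (\<forall>u. 4 * ltrace (br0 b) + 4 * \<mu> * ltrace D - 2 * ltrace (D \<circ> D)
            - 2 * ltrace (D \<circ> adjoint D) - ltrace (K \<circ> K) = 0 \<and>
          ltrace (\<lambda>v. adjoint (br0 (K v)) u)
            + 2 * ltrace (\<lambda>v. D (br0 u v) + adjoint D (br0 u v))
            + 2 * ltrace (dext_bracket br0 K D \<mu> b (0, adjoint D u, 0))
            - 2 * ltrace (dext_bracket br0 K D \<mu> b (0, K u, 0)) = 0)"
proof -
  have gl: "bilinear br0" "\<And>x. br0 x x = 0"
    "\<And>x y z. br0 x (br0 y z) + br0 y (br0 z x) + br0 z (br0 x y) = 0"
    using g0_lie unfolding lie_algebra_def by blast+
  have L: "dx br0 K D"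
    by (rule dx.intro, rule gl(1), rule gl(2), rule gl(3), rule K_lin, rule D_lin, rule K_skew)
  show ?thesis by (rule dx.main_loc[OF L])
qed

end
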